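(* Consider the two-route traffic model with affine routing ratios described in the context, and assume that $\phi r_\ell^0\le F_\ell$ for $\ell=1,2$. For $\alpha\in(0,1]$ let $\overline{x}(\alpha)$ be the unique equilibrium of the system with penetration rate $\alpha$. Let $i\in\{1,2\}$ and $j=3-i$. Then $\phi R_i(\overline{x}(\alpha))>F_i$ (unsatisfied demand on route $i$ at equilibrium) if and only if $\phi>F_i(1+E_j/E_i)-E_j(1-2r_i^0)$ and $\alpha>\underline{\alpha}_i:=\dfrac{2E_iE_j(F_i-\phi r_i^0)}{\phi\big(E_iE_j(1-2r_i^0)+\phi E_i-F_i(E_i+E_j)\big)}$.
   Context: Two routes $i=1,2$ connect an origin to a destination, with positive parameters $B_i$ (jam density), $C_i$ (critical density), $F_i$ (capacity), $C_i<B_i$, and constant demand $\phi>0$. Set $v_i=F_i/C_i$ and $E_i=v_iB_i$. The state $x=(x_1,x_2)\in\Omega:=[0,B_1]\times[0,B_2]$ evolves by $\dot x_i=\min\{\phi R_i(x),S_i(x_i)\}-D_i(x_i)$, with $S_i(x_i)=F_i$ if $x_i<C_i$, $S_i(x_i)=\frac{F_i}{B_i-C_i}(B_i-x_i)$ otherwise; $D_i(x_i)=v_ix_i$ if $x_i<C_i$, $D_i(x_i)=F_i$ otherwise. The routing ratios are affine: with penetration rate $\alpha\in(0,1]$ and constants $r_1^0,r_2^0\ge0$, $r_1^0+r_2^0=1$, $R_1(x)=(1-\alpha)r_1^0+\alpha\big(\tfrac12+\tfrac12(\tfrac{x_2}{B_2}-\tfrac{x_1}{B_1})\big)$, $R_2(x)=(1-\alpha)r_2^0+\alpha\big(\tfrac12+\tfrac12(\tfrac{x_1}{B_1}-\tfrac{x_2}{B_2})\big)$.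 Standing assumptions: $\phi<F_1+F_2$; $F_i>(1-\alpha)\phi r_i^0$ for $i=1,2$; $\phi<E_i$ for $i=1,2$. Under these assumptions the system has, for each $\alpha$, a unique equilibrium $\overline{x}(\alpha)\in\Omega$. *)

theory Defs
  imports Complex_Main
begin

text \<open>Two-route model. Route-indexed parameters are functions on nat, used at indices 1 and 2;
  the other route of route i is 3 - i.\<close>

definition vel :: "(nat \<Rightarrow> real) \<Rightarrow> (nat \<Rightarrow> real) \<Rightarrow> nat \<Rightarrow> real" where
  "vel F C i = F i / C i"

definition Ecap :: "(nat \<Rightarrow> real) \<Rightarrow> (nat \<Rightarrow> real) \<Rightarrow> (nat \<Rightarrow> real) \<Rightarrow> nat \<Rightarrow> real" where
  "Ecap B C F i = vel F C i * B i"

definition supply_fn :: "(nat \<Rightarrow> real) \<Rightarrow> (nat \<Rightarrow> real) \<Rightarrow> (nat \<Rightarrow> real) \<Rightarrow> nat \<Rightarrow> real \<Rightarrow> real" where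
  "supply_fn B C F i y = (if y < C i then F i else F i / (B i - C i) * (B i - y))"

definition demand_fn :: "(nat \<Rightarrow> real) \<Rightarrow> (nat \<Rightarrow> real) \<Rightarrow> nat \<Rightarrow> real \<Rightarrow> real" where
  "demand_fn C F i y = (if y < C i then vel F C i * y else F i)"

definition route_ratio :: "(nat \<Rightarrow> real) \<Rightarrow> real \<Rightarrow> (nat \<Rightarrow> real) \<Rightarrow> nat \<Rightarrow> (nat \<Rightarrow> real) \<Rightarrow> real" where
  "route_ratio B \<alpha> r0 i x =
     (1 - \<alpha>) * r0 i + \<alpha> * (1/2 + 1/2 * (x (3 - i) / B (3 - i) - x i / B i))"

definition field_fn :: "(nat \<Rightarrow> real) \<Rightarrow> (nat \<Rightarrow> real) \<Rightarrow> (nat \<Rightarrow> real) \<Rightarrow> real \<Rightarrow> real \<Rightarrow> (nat \<Rightarrow> real)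
     \<Rightarrow> nat \<Rightarrow> (nat \<Rightarrow> real) \<Rightarrow> real" where
  "field_fn B C F \<phi> \<alpha> r0 i x =
     min (\<phi> * route_ratio B \<alpha> r0 i x) (supply_fn B C F i (x i)) - demand_fn C F i (x i)"

definition is_equilibrium :: "(nat \<Rightarrow> real) \<Rightarrow> (nat \<Rightarrow> real) \<Rightarrow> (nat \<Rightarrow> real) \<Rightarrow> real \<Rightarrow> real
     \<Rightarrow> (nat \<Rightarrow> real) \<Rightarrow> (nat \<Rightarrow> real) \<Rightarrow> bool" where
  "is_equilibrium B C F \<phi> \<alpha> r0 x \<longleftrightarrow>
     (\<forall>l\<in>{1,2}. 0 \<le> x l \<and> x l \<le> B l \<and> field_fn B C F \<phi> \<alpha> r0 l x = 0)"

end

theory Submission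
  imports Defs
begin



lemma step1:
  fixes R ri Ei Ej Fi Fj phi a :: real
  assumes P: "Ei>0" "Ej>0" "phi>0" "a>0" "phi < Fi+Fj"
    and R: "R = (1-a)*ri + a*(1/2 + 1/2*(min (phi*(1-R)) Fj / Ej - min (phi*R) Fi / Ei))"
  defines "T \<equiv> (1-a)*ri + a/2*(1 + (phi-Fi)/Ej - Fi/Ei)"
  shows "phi*R > Fi \<longleftrightarrow> Fi < phi*T"
proof
  assume h: "phi*R > Fi"
  then have m1: "min (phi*R) Fi = Fi" by simp
  have m2: "min (phi*(1-R)) Fj = phi*(1-R)" using h P by (simp add: algebra_simps)
  have R2: "R = (1-a)*ri + a*(1/2 + 1/2*(phi*(1-R)/Ej - Fi/Ei))" using R by (simp only: m1 m2)
  have "T + a/2*(Fi - phi*R)/Ej = (1-a)*ri + a*(1/2 + 1/2*(phi*(1-R)/Ej - Fi/Ei))"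
    unfolding T_def using P(1,2) by (simp add: field_simps)
  then have "R = T + a/2*(Fi - phi*R)/Ej" using R2 by linarith
  moreover have "a/2*(Fi - phi*R)/Ej < 0" using h P by (simp add: divide_neg_pos mult_pos_neg)
  ultimately have "R < T" by linarith
  then have "phi*R < phi*T" using P(3) by (rule mult_strict_left_mono)
  then show "Fi < phi*T" using h by linarith
next
  assume h: "Fi < phi*T"
  show "phi*R > Fi"
  proof (rule ccontr)
    assume n: "\<not> phi*R > Fi"
    then have m1: "min (phi*R) Fi = phi*R" by simp
    have "min (phi*(1-R)) Fj \<ge> phi - Fi" using n P by (simp add: algebra_simps)
    then have "min (phi*(1-R)) Fj / Ej \<ge> (phi - Fi)/Ej" using P by (simp add: divide_right_mono)
    moreover have "phi*R/Ei \<le> Fi/Ei" using n P by (simp add: divide_right_mono)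
    ultimately have nn: "0 \<le> (min (phi*(1-R)) Fj / Ej - (phi-Fi)/Ej) + (Fi/Ei - phi*R/Ei)" by linarith
    have R3: "R = (1-a)*ri + a*(1/2 + 1/2*(min (phi*(1-R)) Fj / Ej - phi*R / Ei))"
      using R by (simp only: m1)
    have "(1-a)*ri + a*(1/2 + 1/2*(min (phi*(1-R)) Fj / Ej - phi*R / Ei)) - T
       = a/2*((min (phi*(1-R)) Fj / Ej - (phi-Fi)/Ej) + (Fi/Ei - phi*R/Ei))"
      unfolding T_def by (simp add: algebra_simps diff_divide_distrib)
    moreover have "0 \<le> a/2*((min (phi*(1-R)) Fj / Ej - (phi-Fi)/Ej) + (Fi/Ei - phi*R/Ei))"
      using nn P(4) by simp
    ultimately have "R \<ge> T" using R3 by linarith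
    then have "phi*R \<ge> phi*T" using P by simp
    then show False using n h by linarith
  qed
qed

lemma step2:
  fixes ri Ei Ej Fi phi a :: real
  assumes "Ei>0" "Ej>0" "phi>0" "a>0" "phi*ri \<le> Fi"
  defines "T \<equiv> (1-a)*ri + a/2*(1 + (phi-Fi)/Ej - Fi/Ei)"
  shows "Fi < phi*T \<longleftrightarrow> (phi > Fi*(1+Ej/Ei) - Ej*(1-2*ri) \<and>
      a > (2*Ei*Ej*(Fi - phi*ri)) / (phi*(Ei*Ej*(1-2*ri) + phi*Ei - Fi*(Ei+Ej))))"
proof -
  define K where "K = Ei*Ej*(1-2*ri) + phi*Ei - Fi*(Ei+Ej)"
  have e1: "phi*T - Fi = (a*phi*K/(2*Ei*Ej)) - (Fi - phi*ri)"
    unfolding T_def K_def using assms by (simp add: field_simps)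
  have e2: "phi > Fi*(1+Ej/Ei) - Ej*(1-2*ri) \<longleftrightarrow> K > 0"
  proof -
    have "K = Ei*(phi - (Fi*(1+Ej/Ei) - Ej*(1-2*ri)))" unfolding K_def using assms
      by (simp add: field_simps)
    then show ?thesis using assms by (simp add: zero_less_mult_iff)
  qed
  have "Fi < phi*T \<longleftrightarrow> Fi - phi*ri < a*phi*K/(2*Ei*Ej)" using e1 by linarith
  also have "\<dots> \<longleftrightarrow> K > 0 \<and> a > (2*Ei*Ej*(Fi - phi*ri)) / (phi*K)"
  proof
    assume h: "Fi - phi*ri < a*phi*K/(2*Ei*Ej)"
    then have "0 < a*phi*K/(2*Ei*Ej)" using assms by linarith
    moreover have "0 < 2*Ei*Ej" using assms by simp
    ultimately have "0 < (a*phi)*K" by (simp add: zero_less_divide_iff)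
    moreover have "a*phi > 0" using assms by simp
    ultimately have Kp: "K > 0" using zero_less_mult_pos by blast
    have "(Fi - phi*ri)*(2*Ei*Ej) < a*phi*K" using h assms by (simp add: pos_less_divide_eq)
    then have "(2*Ei*Ej*(Fi - phi*ri)) / (phi*K) < a" using Kp assms
      by (simp add: pos_divide_less_eq mult.commute mult.left_commute)
    then show "K > 0 \<and> a > (2*Ei*Ej*(Fi - phi*ri)) / (phi*K)" using Kp by simp
  next
    assume h: "K > 0 \<and> a > (2*Ei*Ej*(Fi - phi*ri)) / (phi*K)"
    moreover have "phi*K > 0" using h assms by simp
    ultimately have "2*Ei*Ej*(Fi - phi*ri) < a*(phi*K)"
      by (simp add: pos_divide_less_eq)
    then show "Fi - phi*ri < a*phi*K/(2*Ei*Ej)" using assms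
      by (simp add: pos_less_divide_eq mult.commute mult.left_commute)
  qed
  finally show ?thesis using e2 K_def by simp
qed

theorem proposition3:
  fixes B C F r0 x :: "nat \<Rightarrow> real" and \<phi> \<alpha> :: real and i :: nat
  assumes pos: "\<forall>l\<in>{1,2}. 0 < B l \<and> 0 < C l \<and> 0 < F l \<and> C l < B l"
    and phi_pos: "0 < \<phi>"
    and alpha: "0 < \<alpha>" "\<alpha> \<le> 1"
    and r0: "r0 1 \<ge> 0" "r0 2 \<ge> 0" "r0 1 + r0 2 = 1"
    and A1: "\<phi> < F 1 + F 2"
    and A2: "\<forall>l\<in>{1,2}. F l > (1 - \<alpha>) * \<phi> * r0 l"
    and A3: "\<forall>l\<in>{1,2}. \<phi> < Ecap B C F l"
    and H: "\<forall>l\<in>{1,2}. \<phi> * r0 l \<le> F l"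
    and eq: "is_equilibrium B C F \<phi> \<alpha> r0 x"
    and i: "i \<in> {1,2}"
  shows "\<phi> * route_ratio B \<alpha> r0 i x > F i \<longleftrightarrow>
    (let j = 3 - i; Ei = Ecap B C F i; Ej = Ecap B C F j in
      \<phi> > F i * (1 + Ej / Ei) - Ej * (1 - 2 * r0 i) \<and>
      \<alpha> > (2 * Ei * Ej * (F i - \<phi> * r0 i)) /
            (\<phi> * (Ei * Ej * (1 - 2 * r0 i) + \<phi> * Ei - F i * (Ei + Ej))))"
proof -
  have eqv: "vel F C l * x l = min (\<phi> * route_ratio B \<alpha> r0 l x) (F l)" if l: "l \<in> {1,2}" for l
  proof -
    have p: "0 < B l" "0 < C l" "0 < F l" "C l < B l" using pos l by auto
    have f0: "field_fn B C F \<phi> \<alpha> r0 l x = 0" and xb: "x l \<le> B l"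
      using eq l unfolding is_equilibrium_def by auto
    show ?thesis
    proof (cases "x l < C l")
      case True
      have "vel F C l * x l < F l" using True p unfolding vel_def
        by (simp add: field_simps)
      then show ?thesis using f0 True unfolding field_fn_def supply_fn_def demand_fn_def
        by (auto simp: min_def split: if_splits)
    next
      case False
      let ?S = "F l / (B l - C l) * (B l - x l)"
      have m: "min (\<phi> * route_ratio B \<alpha> r0 l x) ?S = F l"
        using f0 False unfolding field_fn_def supply_fn_def demand_fn_def by simp
      then have "?S \<ge> F l" by (metis min.cobounded2)
      then have "F l * (B l - x l) \<ge> F l * (B l - C l)" using p
        by (simp add: field_simps)
      then have "B l - x l \<ge> B l - C l" using p by simp
      then have xc: "x l = C l" using False by simp
      have "\<phi> * route_ratio B \<alpha> r0 l x \<ge> F l" using m by (metis min.cobounded1)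
      moreover have "vel F C l * x l = F l" using xc p unfolding vel_def by simp
      ultimately show ?thesis by simp
    qed
  qed
  define j where "j = 3 - i"
  have j: "j \<in> {1,2}" "3 - j = i" "j \<noteq> i" using i unfolding j_def by auto
  have rj: "r0 j = 1 - r0 i" using i r0 unfolding j_def by auto
  have sumR: "route_ratio B \<alpha> r0 j x = 1 - route_ratio B \<alpha> r0 i x"
  proof -
    have "\<alpha> = \<alpha> * r0 i + \<alpha> * r0 j" using rj by (simp flip: distrib_left)
    show ?thesis unfolding route_ratio_def j(2) rj by (simp add: algebra_simps j_def)
  qed
  have xB: "x l / B l = min (\<phi> * route_ratio B \<alpha> r0 l x) (F l) / Ecap B C F l"
    if l: "l \<in> {1,2}" for l
  proof -
    have p: "0 < B l" "0 < C l" "0 < F l" using pos l by auto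
    have "vel F C l > 0" using p unfolding vel_def by simp
    then have "x l / B l = (vel F C l * x l) / (vel F C l * B l)" by simp
    then show ?thesis using eqv[OF l] unfolding Ecap_def by simp
  qed
  have Rfix: "route_ratio B \<alpha> r0 i x = (1-\<alpha>)*r0 i + \<alpha>*(1/2 + 1/2*(min (\<phi>*(1-route_ratio B \<alpha> r0 i x)) (F j) / Ecap B C F j - min (\<phi>*route_ratio B \<alpha> r0 i x) (F i) / Ecap B C F i))"
  proof -
    have "route_ratio B \<alpha> r0 i x = (1-\<alpha>)*r0 i + \<alpha>*(1/2 + 1/2*(x j / B j - x i / B i))"
      unfolding route_ratio_def j_def by simp
    also have "\<dots> = (1-\<alpha>)*r0 i + \<alpha>*(1/2 + 1/2*(min (\<phi>*(1-route_ratio B \<alpha> r0 i x)) (F j) / Ecap B C F j - min (\<phi>*route_ratio B \<alpha> r0 i x) (F i) / Ecap B C F i))"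
      by (simp only: xB[OF i] xB[OF j(1)] sumR)
    finally show ?thesis .
  qed
  have Ei: "Ecap B C F i > 0" using A3 phi_pos i by fastforce
  have Ej: "Ecap B C F j > 0" using A3 phi_pos j by fastforce
  have phs: "\<phi> < F i + F j" using A1 i unfolding j_def by auto
  have Hi: "\<phi> * r0 i \<le> F i" using H i by auto
  note s1 = step1[OF Ei Ej phi_pos alpha(1) phs Rfix]
  note s2 = step2[OF Ei Ej phi_pos alpha(1) Hi]
  show ?thesis unfolding Let_def j_def[symmetric] using s1 s2 by simp
qed

end
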